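(* Let $N\ge 1$ and $d$ be integers and let $0\le m_1<m_2<\dots<m_N<d$ be integers. Then the $(N+1)$-dimensional subspace $$V=\mathrm{Span}\{P_{m_1;d}(x),\dots,P_{m_N;d}(x),P_{d;d}(x)\}\subset \mathrm{Poly}_d$$ is the unique element of the Schubert intersection $$\Omega_{\mathbf a}(0)\cap\Omega_{(d-N)}(-1)\cap\Omega_{\mathbf w}(\infty)\subset Gr_{N+1}(\mathrm{Poly}_d),$$ where $\mathbf a=(m_N+1-N,\dots,m_2-1,m_1)$ (i.e. $a_l=m_{N+1-l}-(N-l)$, $1\le l\le N$) and $\mathbf w=(d-m_1-N,\dots,d-m_{N-1}-2,d-m_N-1)$ (i.e. $w_l=d-m_l-(N+1-l)$, $1\le l\le N$), and $(d-N)$ denotes the special partition $(d-N,0,\dots,0)$.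
   Context: For integers $1\le m\le d$ (and also $m=0$), the truncated binomial is $P_{m;d}(x)=\sum_{j=0}^{m}\binom{d}{j}x^j$; in particular $P_{d;d}(x)=(x+1)^d$. $\mathrm{Poly}_d$ is the complex vector space of polynomials in $x$ of degree at most $d$, and $Gr_{N+1}(\mathrm{Poly}_d)$ is the Grassmannian of $(N+1)$-dimensional subspaces (of dimension $(N+1)(d-N)$). For $\xi\in\mathbb C$, the osculating flag $\mathcal F_\bullet(\xi)$ has $\mathcal F_j(\xi)=\{f\in\mathrm{Poly}_d:(x-\xi)^{d-j}\mid f\}$, $0\le j\le d$; for $\xi=\infty$, $\mathcal F_j(\infty)=\mathrm{Poly}_j$. A partition is $\mathbf w=(w_1,\dots,w_N)$ with $d-N\ge w_1\ge\dots\ge w_N\ge 0$; set $w_{N+1}=0$. The Schubert cell $\Omega^\circ_{\mathbf w}(\xi)$ is the set of $V\in Gr_{N+1}(\mathrm{Poly}_d)$ with $\dim(V\cap\mathcal F_{d-N-1+i-w_i}(\xi))=i$ and $\dim(V\cap\mathcal F_{d-N-2+i-w_i}(\xi))=i-1$ for $i=1,\dots,N+1$; the Schubert variety $\Omega_{\mathbf w}(\xi)$ is its closure. (Equivalently, the orders at $\xi$ of the nonzero polynomials of $V$ — order at $\infty$ of $f$ being $d-\deg f$ — include the values $w_{N+2-i}+i-1$... i.e. the cell prescribes the $N+1$ distinct orders $w_l+N+1-l$, $1\le l\le N+1$.) *)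

theory Defs
  imports "HOL-Computational_Algebra.Polynomial"
begin

type_synonym cpoly = "complex poly"

definition Poly_le :: "nat \<Rightarrow> cpoly set" where
  "Poly_le d = {f. degree f \<le> d}"

definition psubspace :: "cpoly set \<Rightarrow> bool" where
  "psubspace V = module.subspace (smult :: complex \<Rightarrow> cpoly \<Rightarrow> cpoly) V"

definition pspan :: "cpoly set \<Rightarrow> cpoly set" where
  "pspan S = module.span (smult :: complex \<Rightarrow> cpoly \<Rightarrow> cpoly) S"

definition pdim :: "cpoly set \<Rightarrow> nat" where
  "pdim V = vector_space.dim (smult :: complex \<Rightarrow> cpoly \<Rightarrow> cpoly) V"

definition in_Gr :: "nat \<Rightarrow> nat \<Rightarrow> cpoly set \<Rightarrow> bool" where
  "in_Gr k d V \<longleftrightarrow> psubspace V \<and> V \<subseteq> Poly_le d \<and> pdim V = k"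

definition Ptrunc :: "nat \<Rightarrow> nat \<Rightarrow> cpoly" where
  "Ptrunc m d = (\<Sum>j\<le>m. monom (of_nat (d choose j)) j)"

definition osc_flag :: "nat \<Rightarrow> complex \<Rightarrow> nat \<Rightarrow> cpoly set" where
  "osc_flag d \<xi> j = {f \<in> Poly_le d. [:-\<xi>, 1:] ^ (d - j) dvd f}"

definition inf_flag :: "nat \<Rightarrow> nat \<Rightarrow> cpoly set" where
  "inf_flag d j = Poly_le j"

text \<open>A partition w = (w_1,...,w_N) is a function on indices 1..N; the convention
  w_{N+1} = 0 is built into the Schubert conditions.\<close>
definition is_partition :: "nat \<Rightarrow> nat \<Rightarrow> (nat \<Rightarrow> nat) \<Rightarrow> bool" where
  "is_partition N d w \<longleftrightarrow> (\<forall>i\<in>{1..N}. w i \<le> d - N) \<and>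
     (\<forall>i j. 1 \<le> i \<and> i \<le> j \<and> j \<le> N \<longrightarrow> w j \<le> w i)"

definition ext_part :: "nat \<Rightarrow> (nat \<Rightarrow> nat) \<Rightarrow> nat \<Rightarrow> nat" where
  "ext_part N w i = (if i = N + 1 then 0 else w i)"

text \<open>Schubert variety Omega_w(F) in Gr_{N+1}(Poly_d) for a flag F: the closure of the
  Schubert cell, i.e. dim(V \<inter> F_{d-N-1+i-w_i}) \<ge> i for i = 1..N+1.\<close>
definition schubert_var ::
  "nat \<Rightarrow> nat \<Rightarrow> (nat \<Rightarrow> nat) \<Rightarrow> (nat \<Rightarrow> cpoly set) \<Rightarrow> cpoly set \<Rightarrow> bool" where
  "schubert_var N d w F V \<longleftrightarrow> in_Gr (N + 1) d V \<and>
     (\<forall>i\<in>{1..N+1}. pdim (V \<inter> F ((d + i) - (N + 1 + ext_part N w i))) \<ge> i)"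

definition special_part :: "nat \<Rightarrow> nat \<Rightarrow> nat" where
  "special_part k l = (if l = 1 then k else 0)"

end

theory Submission
  imports Defs
begin


interpretation PV: vector_space "smult :: complex \<Rightarrow> complex poly \<Rightarrow> complex poly"
  by unfold_locales (auto simp: smult_add_right smult_add_left)

lemma pspan_eq: "pspan = PV.span" by (simp add: pspan_def fun_eq_iff)
lemma pdim_eq: "pdim = PV.dim" by (simp add: pdim_def fun_eq_iff)
lemma psubspace_eq: "psubspace = PV.subspace" by (simp add: psubspace_def fun_eq_iff)

context vector_space begin

lemma U1:
  assumes "finite Y" "independent X" "independent Y" "span X \<inter> span Y \<subseteq> {0}"
  shows "independent (X \<union> Y)"
proof -
  have "\<And>Y'. Y' \<subseteq> Y \<Longrightarrow> independent (X \<union> Y')"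
  proof -
    fix Y' assume "Y' \<subseteq> Y"
    have "finite Y'" using \<open>Y' \<subseteq> Y\<close> assms(1) finite_subset by blast
    then show "independent (X \<union> Y')" using \<open>Y' \<subseteq> Y\<close>
    proof (induction Y' rule: finite_induct)
      case empty then show ?case using assms(2) by simp
    next
      case (insert b Y')
      have IH: "independent (X \<union> Y')" using insert by auto
      show ?case
      proof (cases "b \<in> X")
        case True
        then show ?thesis using IH by (simp add: insert_absorb)
      next
        case False
        have indY: "independent (insert b Y')" using insert.prems assms(3) independent_mono by blast
        then have bY: "b \<notin> span Y'" using insert.hyps(2) independent_insert by auto
        have "b \<notin> span (X \<union> Y')"
        proof
          assume "b \<in> span (X \<union> Y')"
          then obtain x y where xy: "b = x + y" "x \<in> span X" "y \<in> span Y'" by (auto simp: span_Un)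
          have "x = b - y" using xy by simp
          moreover have "b - y \<in> span Y"
            using insert.prems xy(3) span_mono[of Y' Y] span_base[of b Y]
            by (meson insertI1 insert_subset span_diff subsetD)
          ultimately have "x = 0" using assms(4) xy(2) by auto
          then show False using xy bY by simp
        qed
        then have "independent (insert b (X \<union> Y'))" using IH independent_insertI by blast
        then show ?thesis by simp
      qed
    qed
  qed
  then show ?thesis by blast
qed

lemma U2:
  assumes "finite X" "finite Y" "independent (X \<union> Y)" "X \<inter> Y = {}"
  shows "span X \<inter> span Y \<subseteq> {0}"
proof
  fix z assume z: "z \<in> span X \<inter> span Y"
  from z have "z \<in> range (\<lambda>u. \<Sum>v\<in>X. u v *s v)" unfolding span_finite[OF assms(1)] by blast
  then obtain u where u: "(\<Sum>v\<in>X. u v *s v) = z" by blast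
  from z have "z \<in> range (\<lambda>u. \<Sum>v\<in>Y. u v *s v)" unfolding span_finite[OF assms(2)] by blast
  then obtain w where w: "(\<Sum>v\<in>Y. w v *s v) = z" by blast
  define c where "c v = (if v \<in> X then u v else - w v)" for v
  have "(\<Sum>v\<in>X \<union> Y. c v *s v) = (\<Sum>v\<in>X. c v *s v) + (\<Sum>v\<in>Y. c v *s v)"
    by (rule sum.union_disjoint[OF assms(1,2,4)])
  also have "(\<Sum>v\<in>X. c v *s v) = (\<Sum>v\<in>X. u v *s v)"
    by (rule sum.cong) (simp_all add: c_def)
  also have "(\<Sum>v\<in>Y. c v *s v) = (\<Sum>v\<in>Y. - (w v *s v))"
    using assms(4) by (intro sum.cong) (auto simp: c_def)
  also have "\<dots> = - (\<Sum>v\<in>Y. w v *s v)" by (rule sum_negf)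
  finally have s0: "(\<Sum>v\<in>X \<union> Y. c v *s v) = 0" using u w by simp
  have fXY: "finite (X \<union> Y)" using assms(1,2) by simp
  have "u v = 0" if "v \<in> X" for v
  proof -
    have "c v = 0" using independentD[OF assms(3) fXY order_refl s0] that by blast
    then show ?thesis using that by (simp add: c_def)
  qed
  then have "\<forall>v\<in>X. u v *s v = 0" by simp
  then have h0: "(\<Sum>v\<in>X. u v *s v) = 0" by (rule sum.neutral)
  have "z = 0" using u[symmetric] h0 by (rule trans)
  then show "z \<in> {0}" by simp
qed

lemma H1:
  assumes "independent B" "B \<subseteq> S" "S \<subseteq> span W" "finite W"
  shows "card B \<le> dim S" "finite B"
proof -
  obtain A where A: "B \<subseteq> A" "A \<subseteq> S" "independent A" "S \<subseteq> span A"
    using maximal_independent_subset_extend[OF assms(2,1)] by blast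
  have "A \<subseteq> span W" using A(2) assms(3) by (rule order_trans)
  then have fA: "finite A" using independent_span_bound[OF assms(4) A(3)] by simp
  have "card A = dim S" by (rule basis_card_eq_dim[OF A(2) A(4) A(3)])
  then show "card B \<le> dim S" using card_mono[OF fA A(1)] by simp
  show "finite B" using fA A(1) by (rule finite_subset[rotated])
qed

lemma H2:
  assumes "independent B" "B \<subseteq> S" "S \<subseteq> span W" "finite W" "dim S \<le> card B"
  shows "S \<subseteq> span B"
proof
  fix s assume "s \<in> S"
  show "s \<in> span B"
  proof (rule ccontr)
    assume ns: "s \<notin> span B"
    then have i: "independent (insert s B)" using independent_insertI assms(1) by blast
    have sub: "insert s B \<subseteq> S" using assms(2) \<open>s \<in> S\<close> by blast
    have c: "card (insert s B) \<le> dim S" by (rule H1(1)[OF i sub assms(3,4)])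
    have f: "finite B" by (rule H1(2)[OF assms(1,2,3,4)])
    have "s \<notin> B" using ns span_base by blast
    then have "card (insert s B) = Suc (card B)" using f by simp
    then show False using assms(5) c by simp
  qed
qed

lemma G2:
  assumes "subspace V" "subspace F" "V \<subseteq> span W" "F \<subseteq> span W" "finite W"
    "independent BF" "BF \<subseteq> F"
  shows "dim V + card BF \<le> dim (V \<inter> F) + card W"
proof -
  obtain C where C: "C \<subseteq> V \<inter> F" "independent C" "V \<inter> F \<subseteq> span C" "card C = dim (V \<inter> F)"
    using basis_exists by blast
  obtain A' where A': "C \<subseteq> A'" "A' \<subseteq> V" "independent A'" "V \<subseteq> span A'"
    using maximal_independent_subset_extend[of C V] C by blast
  have cA': "card A' = dim V" using basis_card_eq_dim A' by blast
  have fA': "finite A'" using H1(2)[OF A'(3) A'(2) assms(3,5)] .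
  have fBF: "finite BF" using H1(2)[OF assms(6,7,4,5)] .
  define A where "A = A' - C"
  have fA: "finite A" "finite C" using fA' A' by (auto simp: A_def intro: finite_subset)
  have AC: "A' = A \<union> C" "A \<inter> C = {}" using A' by (auto simp: A_def)
  have s1: "span A \<inter> span C \<subseteq> {0}" using U2[OF fA] AC A'(3) by simp
  have s2: "span A \<inter> span BF \<subseteq> {0}"
  proof
    fix z assume z: "z \<in> span A \<inter> span BF"
    have "A \<subseteq> V" using A'(2) by (auto simp: A_def)
    then have "span A \<subseteq> V" using assms(1) span_minimal by blast
    moreover have "span BF \<subseteq> F" using assms(2,7) span_minimal by blast
    ultimately have "z \<in> span C" using z C(3) by blast
    then show "z \<in> {0}" using z s1 by blast
  qed
  have iA: "independent A" using A'(3) independent_mono by (auto simp: A_def)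
  have iU: "independent (A \<union> BF)" using U1[OF fBF iA assms(6) s2] .
  have dj: "A \<inter> BF = {}"
  proof (rule ccontr)
    assume "A \<inter> BF \<noteq> {}"
    then obtain z where "z \<in> A" "z \<in> BF" by blast
    then have "z = 0" using s2 span_base by blast
    then show False using \<open>z \<in> A\<close> iA dependent_zero by blast
  qed
  have "A \<union> BF \<subseteq> span W"
    using A'(2) assms(3,4,7) by (auto simp: A_def)
  then have "card (A \<union> BF) \<le> card W" using independent_span_bound[OF assms(5) iU] by blast
  moreover have "card (A \<union> BF) = card A + card BF" using card_Un_disjoint[OF fA(1) fBF dj] .
  moreover have "card A' = card A + card C" using AC(1) card_Un_disjoint[OF fA AC(2)] by simp
  ultimately show ?thesis using cA' C(4) by linarith
qed

lemma G3:
  assumes "V \<subseteq> span W" "finite W" "U \<subseteq> V" "Z \<subseteq> V" "subspace U" "subspace Z"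
    "U \<inter> Z \<subseteq> {0}" "dim V \<le> dim U + dim Z" "v \<in> V"
  shows "\<exists>u\<in>U. \<exists>z\<in>Z. v = u + z"
proof -
  obtain A where A: "A \<subseteq> U" "independent A" "U \<subseteq> span A" "card A = dim U"
    using basis_exists by blast
  obtain B where B: "B \<subseteq> Z" "independent B" "Z \<subseteq> span B" "card B = dim Z"
    using basis_exists by blast
  have fA: "finite A" using H1(2)[OF A(2) A(1)] assms(1,2,3) by blast
  have fB: "finite B" using H1(2)[OF B(2) B(1)] assms(1,2,4) by blast
  have sA: "span A \<subseteq> U" using A assms(5) span_minimal by blast
  have sB: "span B \<subseteq> Z" using B assms(6) span_minimal by blast
  have iU: "independent (A \<union> B)" using U1[OF fB A(2) B(2)] sA sB assms(7) by blast
  have dj: "A \<inter> B = {}"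
  proof (rule ccontr)
    assume "A \<inter> B \<noteq> {}"
    then obtain z where "z \<in> A" "z \<in> B" by blast
    then have "z = 0" using A B assms(7) by blast
    then show False using \<open>z \<in> A\<close> A(2) dependent_zero by blast
  qed
  have cAB: "card (A \<union> B) = dim U + dim Z" using card_Un_disjoint[OF fA fB dj] A(4) B(4) by simp
  have sub: "A \<union> B \<subseteq> V" using A(1) B(1) assms(3,4) by blast
  have "dim V \<le> card (A \<union> B)" using cAB assms(8) by simp
  then have "V \<subseteq> span (A \<union> B)"
    using H2[OF iU sub assms(1,2)] by blast
  then have "v \<in> span (A \<union> B)" using assms(9) by blast
  then obtain x y where "v = x + y" "x \<in> span A" "y \<in> span B" by (auto simp: span_Un)
  then show ?thesis using sA sB by blast
qed

lemma dim_pos_nonzero: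
  assumes "1 \<le> dim S" shows "\<exists>f\<in>S. f \<noteq> 0"
proof (rule ccontr)
  assume "\<not> ?thesis"
  then have "S \<subseteq> span {}" by (auto simp: span_empty)
  then have "dim S \<le> card ({} :: 'b set)" by (rule dim_le_card) simp
  then show False using assms by simp
qed

end


lemma Poly_le_span: "Poly_le d \<subseteq> PV.span ((\<lambda>j. monom 1 j) ` {..d})"
proof
  fix p :: "complex poly" assume "p \<in> Poly_le d"
  then have dp: "degree p \<le> d" by (simp add: Poly_le_def)
  have "p = (\<Sum>i\<le>d. monom (coeff p i) i)" using poly_as_sum_of_monoms'[OF dp] by simp
  also have "\<dots> = (\<Sum>i\<le>d. smult (coeff p i) (monom 1 i))" by (simp add: smult_monom)
  also have "\<dots> \<in> PV.span ((\<lambda>j. monom 1 j) ` {..d})"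
    by (intro PV.span_sum PV.span_scale PV.span_base) simp
  finally show "p \<in> PV.span ((\<lambda>j. monom 1 j) ` {..d})" .
qed

lemma card_Mon: "card ((\<lambda>j. monom (1::complex) j) ` {..d}) = d + 1"
  by (subst card_image) (auto simp: inj_on_def monom_eq_iff')

lemma Poly_le_subspace: "PV.subspace (Poly_le d)"
  unfolding PV.subspace_def Poly_le_def
  by (auto intro: order_trans[OF degree_add_le] order_trans[OF degree_smult_le])

lemma osc_subspace: "PV.subspace (osc_flag d \<xi> j)"
  unfolding PV.subspace_def osc_flag_def Poly_le_def
  by (auto intro: order_trans[OF degree_add_le] order_trans[OF degree_smult_le] dvd_add dvd_smult)

lemma indep_deg:
  fixes f :: "nat \<Rightarrow> complex poly"
  assumes fin: "finite I" and inj: "inj_on (\<lambda>i. degree (f i)) I" and nz: "\<And>i. i \<in> I \<Longrightarrow> f i \<noteq> 0"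
  shows "PV.independent (f ` I)" "card (f ` I) = card I"
proof -
  have injf: "inj_on f I" using inj by (auto simp: inj_on_def)
  then show "card (f ` I) = card I" by (rule card_image)
  define S where "S = f ` I"
  have fS: "finite S" using fin by (simp add: S_def)
  have injS: "inj_on degree S" using inj by (auto simp: inj_on_def S_def)
  have nzS: "\<And>x. x \<in> S \<Longrightarrow> x \<noteq> 0" using nz by (auto simp: S_def)
  have "PV.independent S"
  proof (rule PV.independent_if_scalars_zero[OF fS])
    fix c x assume sum0: "(\<Sum>x\<in>S. smult (c x) x) = 0" and xS: "x \<in> S"
    show "c x = 0"
    proof (rule ccontr)
      assume cx: "c x \<noteq> 0"
      define T where "T = {x\<in>S. c x \<noteq> 0}"
      have fT: "finite T" using fS by (simp add: T_def)
      have neT: "T \<noteq> {}" using xS cx by (auto simp: T_def)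
      define M where "M = Max (degree ` T)"
      have "M \<in> degree ` T" unfolding M_def using fT neT by (intro Max_in) auto
      then obtain y where yT: "y \<in> T" and My: "M = degree y" by blast
      have le: "degree z \<le> degree y" if "z \<in> T" for z
      proof -
        have "degree z \<le> M" unfolding M_def using fT that by (intro Max_ge) auto
        then show ?thesis using My by simp
      qed
      have yS: "y \<in> S" and cy: "c y \<noteq> 0" using yT by (auto simp: T_def)
      have "coeff (\<Sum>x\<in>S. smult (c x) x) (degree y) = (\<Sum>x\<in>S. c x * coeff x (degree y))"
        by (simp add: coeff_sum)
      also have "\<dots> = (\<Sum>x\<in>S. if x = y then c y * coeff y (degree y) else 0)"
      proof (rule sum.cong[OF refl])
        fix z assume zS: "z \<in> S"
        show "c z * coeff z (degree y) = (if z = y then c y * coeff y (degree y) else 0)"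
        proof (cases "z = y")
          case False
          show ?thesis
          proof (cases "c z = 0")
            case False
            then have "z \<in> T" using zS by (simp add: T_def)
            then have "degree z \<le> degree y" by (rule le)
            moreover have "degree z \<noteq> degree y" using injS zS yS \<open>z \<noteq> y\<close> by (auto simp: inj_on_def)
            ultimately have "coeff z (degree y) = 0" by (intro coeff_eq_0) simp
            then show ?thesis using \<open>z \<noteq> y\<close> by simp
          qed (simp add: \<open>z \<noteq> y\<close>)
        qed simp
      qed
      also have "\<dots> = c y * coeff y (degree y)" using yS fS by simp
      finally have "c y * lead_coeff y = 0" using sum0 by simp
      then show False using cy nzS[OF yS] by simp
    qed
  qed
  then show "PV.independent (f ` I)" by (simp add: S_def)
qed

lemma coeff_Ptrunc: "coeff (Ptrunc m d) j = (if j \<le> m then of_nat (d choose j) else 0)"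
  unfolding Ptrunc_def by (simp add: coeff_sum coeff_monom)

lemma Ptrunc_dd: "Ptrunc d d = [:1,1:]^d"
proof (rule poly_eqI)
  fix n
  show "coeff (Ptrunc d d) n = coeff ([:1,1:]^d) n"
  proof (cases "n \<le> d")
    case True then show ?thesis by (simp add: coeff_Ptrunc coeff_linear_poly_power)
  next
    case False
    have "degree ([:1::complex,1:]^d) \<le> d"
      using degree_power_le[of "[:1::complex,1:]" d] by simp
    then have "coeff ([:1::complex,1:]^d) n = 0" using False by (intro coeff_eq_0) simp
    then show ?thesis using False by (simp add: coeff_Ptrunc)
  qed
qed

lemma degree_Ptrunc: assumes "m \<le> d" shows "degree (Ptrunc m d) = m"
proof (rule antisym)
  show "degree (Ptrunc m d) \<le> m" by (rule degree_le) (simp add: coeff_Ptrunc)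
  have "coeff (Ptrunc m d) m \<noteq> 0" using assms by (simp add: coeff_Ptrunc)
  then show "m \<le> degree (Ptrunc m d)" by (rule le_degree)
qed

lemma Ptrunc_nz: "Ptrunc m d \<noteq> 0"
proof -
  have "coeff (Ptrunc m d) 0 = 1" by (simp add: coeff_Ptrunc)
  then show ?thesis by auto
qed

lemma X_pow_dvd: "[:- 0, 1:] ^ n dvd p \<longleftrightarrow> (\<forall>k<n. coeff p k = (0::complex))"
proof -
  have "[:- 0, 1:] ^ n = (monom 1 n :: complex poly)" by (simp add: monom_altdef)
  then show ?thesis by (simp add: monom_1_dvd_iff')
qed



definition mmf :: "nat \<Rightarrow> nat \<Rightarrow> (nat \<Rightarrow> nat) \<Rightarrow> nat \<Rightarrow> nat" where
  "mmf N d m i = (if i = N + 1 then d else m i)"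

definition Mon :: "nat \<Rightarrow> complex poly set" where
  "Mon d = (\<lambda>j. monom 1 j) ` {..d}"

lemma Mon_facts: "finite (Mon d)" "card (Mon d) = d + 1" "Poly_le d \<subseteq> PV.span (Mon d)"
  using card_Mon Poly_le_span by (auto simp: Mon_def)

context
  fixes N d :: nat and m :: "nat \<Rightarrow> nat"
  assumes N1: "N \<ge> 1" and mono: "\<And>i j. 1 \<le> i \<Longrightarrow> i < j \<Longrightarrow> j \<le> N \<Longrightarrow> m i < m j"
    and mNd: "m N < d"
begin

lemma m_gap: "1 \<le> i \<Longrightarrow> i \<le> j \<Longrightarrow> j \<le> N \<Longrightarrow> m i + (j - i) \<le> m j"
proof (induction j)
  case 0 then show ?case by simp
next
  case (Suc j)
  show ?case
  proof (cases "i = Suc j")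
    case True then show ?thesis by simp
  next
    case False
    then have "i \<le> j" using Suc.prems by simp
    then have "m i + (j - i) \<le> m j" using Suc by simp
    moreover have "m j < m (Suc j)" using mono[of j "Suc j"] Suc.prems \<open>i \<le> j\<close> by simp
    ultimately show ?thesis using \<open>i \<le> j\<close> by simp
  qed
qed

lemma m_ge: "1 \<le> k \<Longrightarrow> k \<le> N \<Longrightarrow> k - 1 \<le> m k"
  using m_gap[of 1 k] by simp

lemma m_lt_d: "1 \<le> k \<Longrightarrow> k \<le> N \<Longrightarrow> m k < d"
  using m_gap[of k N] mNd by simp

lemma N_le_d: "N \<le> d"
  using m_ge[of N] m_lt_d[of N] N1 by simp

lemma gap_d: "1 \<le> k \<Longrightarrow> k \<le> N \<Longrightarrow> m k + (N + 1 - k) \<le> d"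
  using m_gap[of k N] mNd by simp

abbreviation "mm \<equiv> mmf N d m"
abbreviation "g i \<equiv> Ptrunc (mm i) d"

lemma mm_mono: "1 \<le> i \<Longrightarrow> i < j \<Longrightarrow> j \<le> N + 1 \<Longrightarrow> mm i < mm j"
  using mono[of i j] m_lt_d[of i] by (auto simp: mmf_def)

lemma mm_le: "1 \<le> i \<Longrightarrow> i \<le> N + 1 \<Longrightarrow> mm i \<le> d"
  using m_lt_d[of i] by (auto simp: mmf_def)

lemma mm_inj: "inj_on mm {1..N+1}"
proof (rule inj_onI)
  fix i j assume "i \<in> {1..N+1}" "j \<in> {1..N+1}" "mm i = mm j"
  then show "i = j" using mm_mono[of i j] mm_mono[of j i] by (cases i j rule: linorder_cases) auto
qed

lemma deg_g: "1 \<le> i \<Longrightarrow> i \<le> N + 1 \<Longrightarrow> degree (g i) = mm i"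
  using mm_le degree_Ptrunc by simp

lemma indep_g: assumes "J \<subseteq> {1..N+1}"
  shows "PV.independent (g ` J)" "card (g ` J) = card J"
proof -
  have fJ: "finite J" using assms finite_subset by blast
  have "inj_on (\<lambda>i. degree (g i)) J"
  proof (rule inj_onI)
    fix i j assume ij: "i \<in> J" "j \<in> J" "degree (g i) = degree (g j)"
    have "i \<in> {1..N+1}" "j \<in> {1..N+1}" using ij assms by auto
    then have "mm i = mm j" using deg_g ij(3) by (metis atLeastAtMost_iff)
    then show "i = j" using mm_inj ij assms by (auto simp: inj_on_def)
  qed
  then show "PV.independent (g ` J)" "card (g ` J) = card J"
    using indep_deg[OF fJ, of g] Ptrunc_nz by auto
qed

definition "S0 = g ` {1..N+1}"
definition "V0 = PV.span S0"

lemma S0_eq: "S0 = insert (Ptrunc d d) ((\<lambda>i. Ptrunc (m i) d) ` {1..N})"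
proof -
  have "{1..N+1} = insert (N+1) {1..N}" by auto
  then show ?thesis unfolding S0_def by (auto simp: mmf_def)
qed

lemma S0_Poly: "S0 \<subseteq> Poly_le d"
  unfolding S0_def Poly_le_def using deg_g mm_le by auto

lemma V0_sub: "PV.subspace V0" "V0 \<subseteq> Poly_le d"
  unfolding V0_def using PV.span_minimal[OF S0_Poly Poly_le_subspace] by auto

lemma V0_dim: "PV.dim V0 = N + 1"
  unfolding V0_def S0_def using PV.dim_span_eq_card_independent indep_g[of "{1..N+1}"] by simp

lemma lower_bound:
  assumes "B \<subseteq> V0 \<inter> F" "PV.independent B" "card B = i"
  shows "i \<le> PV.dim (V0 \<inter> F)"
proof -
  have "V0 \<inter> F \<subseteq> PV.span (Mon d)" using V0_sub Mon_facts by blast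
  then show ?thesis using PV.H1(1)[OF assms(2,1) _ Mon_facts(1)] assms(3) by simp
qed


lemma V0_flag_top: "V0 \<inter> osc_flag d \<xi> d = V0" "V0 \<inter> inf_flag d d = V0"
  using V0_sub(2) by (auto simp: osc_flag_def inf_flag_def)

lemma g_in_V0: "1 \<le> j \<Longrightarrow> j \<le> N + 1 \<Longrightarrow> g j \<in> V0"
  unfolding V0_def S0_def by (intro PV.span_base) auto

lemma flag0:
  assumes k: "1 \<le> k" "k \<le> N"
  shows "N + 1 - k \<le> PV.dim (V0 \<inter> osc_flag d 0 (d - 1 - m k))"
proof -
  define f where "f j = g j - g k" for j
  define J where "J = {k+1..N+1}"
  have mmk: "mm k = m k" using k by (simp add: mmf_def)
  have degf: "degree (f j) = mm j" if "j \<in> J" for j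
  proof -
    have "mm k < mm j" using mm_mono[of k j] that k by (simp add: J_def)
    then have "degree (g k) < degree (g j)" using deg_g[of k] deg_g[of j] that k by (simp add: J_def)
    then have "degree (g j + - g k) = degree (g j)" by (intro degree_add_eq_left) simp
    then show ?thesis using deg_g[of j] that k by (simp add: J_def f_def)
  qed
  have nzf: "f j \<noteq> 0" if "j \<in> J" for j
  proof
    assume "f j = 0"
    then have "degree (f j) = 0" by simp
    moreover have "mm k < mm j" using mm_mono[of k j] that k by (simp add: J_def)
    ultimately show False using degf[OF that] by simp
  qed
  have injf: "inj_on (\<lambda>j. degree (f j)) J"
  proof (rule inj_onI)
    fix i j assume ij: "i \<in> J" "j \<in> J" "degree (f i) = degree (f j)"
    then have "mm i = mm j" using degf by metis
    moreover have "i \<in> {1..N+1}" "j \<in> {1..N+1}" using ij k by (auto simp: J_def)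
    ultimately show "i = j" using mm_inj by (auto simp: inj_on_def)
  qed
  have fJ: "finite J" by (simp add: J_def)
  note ind = indep_deg[OF fJ injf nzf]
  have "f ` J \<subseteq> V0 \<inter> osc_flag d 0 (d - 1 - m k)"
  proof
    fix p assume "p \<in> f ` J"
    then obtain j where j: "j \<in> J" "p = f j" by blast
    have jr: "k < j" "j \<le> N + 1" using j by (auto simp: J_def)
    have "p \<in> V0" unfolding j f_def using V0_sub(1) g_in_V0[of j] g_in_V0[of k] jr k
      by (intro PV.subspace_diff) auto
    moreover have "degree p \<le> d" using degf[OF j(1)] mm_le[of j] jr k j by simp
    moreover have "d - (d - 1 - m k) = m k + 1" using m_lt_d[OF k] by simp
    moreover have "\<forall>t<m k + 1. coeff p t = 0"
    proof (intro allI impI)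
      fix t assume "t < m k + 1"
      moreover have "mm k < mm j" using mm_mono[of k j] jr k by simp
      ultimately show "coeff p t = 0" using mmk by (simp add: j f_def coeff_Ptrunc)
    qed
    ultimately have "[:- 0, 1:] ^ (m k + 1) dvd p" by (subst X_pow_dvd) simp
    then have "[:- 0, 1:] ^ (d - (d - 1 - m k)) dvd p" using \<open>d - (d - 1 - m k) = m k + 1\<close> by simp
    then show "p \<in> V0 \<inter> osc_flag d 0 (d - 1 - m k)"
      using \<open>p \<in> V0\<close> \<open>degree p \<le> d\<close> by (simp only: osc_flag_def Poly_le_def mem_Collect_eq Int_iff)
  qed
  moreover have "card (f ` J) = N + 1 - k" using ind(2) by (simp add: J_def)
  ultimately show ?thesis using lower_bound ind(1) by blast
qed

lemma flaginf:
  assumes k: "1 \<le> k" "k \<le> N"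
  shows "k \<le> PV.dim (V0 \<inter> inf_flag d (m k))"
proof -
  have "g ` {1..k} \<subseteq> V0 \<inter> inf_flag d (m k)"
  proof
    fix p assume "p \<in> g ` {1..k}"
    then obtain j where j: "1 \<le> j" "j \<le> k" "p = g j" by auto
    have "mm j \<le> m k" using mono[of j k] j k by (cases "j = k") (auto simp: mmf_def)
    then have "degree p \<le> m k" using deg_g[of j] j k by simp
    then show "p \<in> V0 \<inter> inf_flag d (m k)" using g_in_V0[of j] j k
      by (simp add: inf_flag_def Poly_le_def)
  qed
  moreover have "PV.independent (g ` {1..k})" "card (g ` {1..k}) = k"
    using indep_g[of "{1..k}"] k by auto
  ultimately show ?thesis using lower_bound by blast
qed

lemma flagm1_1: "1 \<le> PV.dim (V0 \<inter> osc_flag d (-1) 0)"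
proof -
  have "g (N+1) = [:1,1:]^d" by (simp add: mmf_def Ptrunc_dd)
  moreover have "[:1,1:]^d \<in> osc_flag d (-1) 0"
    using degree_linear_power[of "1::complex" d] by (simp add: osc_flag_def Poly_le_def)
  ultimately have "{g (N+1)} \<subseteq> V0 \<inter> osc_flag d (-1) 0" using g_in_V0[of "N+1"] by simp
  moreover have "PV.independent {g (N+1)}" using Ptrunc_nz by simp
  ultimately show ?thesis using lower_bound[of "{g (N+1)}"] by simp
qed

lemma flagm1:
  assumes i: "2 \<le> i" "i \<le> N + 1"
  shows "i \<le> PV.dim (V0 \<inter> osc_flag d (-1) (d + i - (N + 1)))"
proof -
  define k where "k = N + 1 - i"
  define F where "F = osc_flag d (-1) (d + i - (N + 1))"
  define f where "f j = [:1,1:]^k * monom (1::complex) j" for j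
  have kd: "k \<le> d" using N_le_d i by (simp add: k_def)
  have nzf: "f j \<noteq> 0" for j by (simp add: f_def)
  have degf: "degree (f j) = k + j" for j
    unfolding f_def by (subst degree_mult_eq) (simp_all add: degree_linear_power degree_monom_eq)
  have injf: "inj_on (\<lambda>j. degree (f j)) {..d-k}" by (rule inj_onI) (simp add: degf)
  note ind = indep_deg[OF _ injf nzf]
  have BF: "f ` {..d-k} \<subseteq> F"
  proof
    fix p assume "p \<in> f ` {..d-k}"
    then obtain j where j: "j \<le> d - k" "p = f j" by auto
    have "d - (d + i - (N + 1)) = k" using N_le_d i by (simp add: k_def)
    then show "p \<in> F" using j degf[of j] kd
      by (simp add: F_def osc_flag_def Poly_le_def f_def)
  qed
  have "PV.dim V0 + card (f ` {..d-k}) \<le> PV.dim (V0 \<inter> F) + card (Mon d)"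
    using PV.G2[OF V0_sub(1) osc_subspace _ _ Mon_facts(1) ind(1) BF[unfolded F_def]]
      V0_sub(2) Mon_facts(3) osc_flag_def[of d "-1" "d + i - (N + 1)"] F_def
    by fastforce
  then have "N + 1 + (d - k + 1) \<le> PV.dim (V0 \<inter> F) + (d + 1)"
    using V0_dim ind(2) Mon_facts(2) by simp
  then show ?thesis using kd i unfolding k_def F_def by arith
qed


lemma V0_Gr: "in_Gr (N + 1) d V0"
  by (simp add: in_Gr_def psubspace_eq pdim_eq V0_sub V0_dim)

lemma V0_a: "schubert_var N d (\<lambda>l. m (N + 1 - l) - (N - l)) (osc_flag d 0) V0"
  unfolding schubert_var_def
proof (intro conjI V0_Gr ballI)
  fix i assume i: "i \<in> {1..N+1}"
  show "i \<le> pdim (V0 \<inter> osc_flag d 0 (d + i - (N + 1 + ext_part N (\<lambda>l. m (N + 1 - l) - (N - l)) i)))"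
  proof (cases "i = N + 1")
    case True
    then show ?thesis using V0_flag_top(1) V0_dim by (simp add: ext_part_def pdim_eq)
  next
    case False
    define k where "k = N + 1 - i"
    have k: "1 \<le> k" "k \<le> N" "i = N + 1 - k" using i False by (auto simp: k_def)
    have e: "ext_part N (\<lambda>l. m (N + 1 - l) - (N - l)) i = m k - (N - i)"
      using False by (simp add: ext_part_def k_def)
    have h1: "k - 1 \<le> m k" "m k + (N + 1 - k) \<le> d" using m_ge[OF k(1,2)] gap_d[OF k(1,2)] by auto
    have "d + i - (N + 1 + (m k - (N - i))) = d - 1 - m k"
    proof -
      obtain a where a: "a = m k" by blast
      have "d + i - (N + 1 + (a - (N - i))) = d - 1 - a" using h1 k unfolding a[symmetric] by linarith
      then show ?thesis using a by simp
    qed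
    then show ?thesis using flag0[OF k(1,2)] k(3) e by (simp add: pdim_eq)
  qed
qed

lemma V0_b: "schubert_var N d (special_part (d - N)) (osc_flag d (-1)) V0"
  unfolding schubert_var_def
proof (intro conjI V0_Gr ballI)
  fix i assume i: "i \<in> {1..N+1}"
  show "i \<le> pdim (V0 \<inter> osc_flag d (-1) (d + i - (N + 1 + ext_part N (special_part (d - N)) i)))"
  proof (cases "i = 1")
    case True
    have "ext_part N (special_part (d - N)) i = d - N" using True N1 by (simp add: ext_part_def special_part_def)
    moreover have "d + 1 - (N + 1 + (d - N)) = 0" using N_le_d by simp
    ultimately show ?thesis using True flagm1_1 by (simp add: pdim_eq)
  next
    case False
    have "ext_part N (special_part (d - N)) i = 0" using False by (simp add: ext_part_def special_part_def)
    then show ?thesis using flagm1[of i] i False by (simp add: pdim_eq)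
  qed
qed

lemma V0_c: "schubert_var N d (\<lambda>l. d - m l - (N + 1 - l)) (inf_flag d) V0"
  unfolding schubert_var_def
proof (intro conjI V0_Gr ballI)
  fix i assume i: "i \<in> {1..N+1}"
  show "i \<le> pdim (V0 \<inter> inf_flag d (d + i - (N + 1 + ext_part N (\<lambda>l. d - m l - (N + 1 - l)) i)))"
  proof (cases "i = N + 1")
    case True
    then show ?thesis using V0_flag_top(2) V0_dim by (simp add: ext_part_def pdim_eq)
  next
    case False
    have k: "1 \<le> i" "i \<le> N" using i False by auto
    have "ext_part N (\<lambda>l. d - m l - (N + 1 - l)) i = d - m i - (N + 1 - i)"
      using False by (simp add: ext_part_def)
    moreover have "d + i - (N + 1 + (d - m i - (N + 1 - i))) = m i"
    proof -
      obtain a where a: "a = m i" by blast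
      have "a + (N + 1 - i) \<le> d" using gap_d[OF k] a by simp
      then have "d + i - (N + 1 + (d - a - (N + 1 - i))) = a" using k by linarith
      then show ?thesis using a by simp
    qed
    ultimately show ?thesis using flaginf[OF k] by (simp add: pdim_eq)
  qed
qed


lemma idx_a:
  assumes k: "1 \<le> k" "k \<le> N"
  shows "d + (N + 1 - k) - (N + 1 + ext_part N (\<lambda>l. m (N + 1 - l) - (N - l)) (N + 1 - k)) = d - 1 - m k"
proof -
  have e: "ext_part N (\<lambda>l. m (N + 1 - l) - (N - l)) (N + 1 - k) = m k - (N - (N + 1 - k))"
    using k by (simp add: ext_part_def)
  have h1: "k - 1 \<le> m k" "m k + (N + 1 - k) \<le> d" using m_ge[OF k(1,2)] gap_d[OF k(1,2)] by auto
  obtain a where a: "a = m k" by blast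
  have "d + (N + 1 - k) - (N + 1 + (a - (N - (N + 1 - k)))) = d - 1 - a"
    using h1 k unfolding a[symmetric] by linarith
  then show ?thesis using a e by simp
qed

lemma idx_c:
  assumes k: "1 \<le> i" "i \<le> N"
  shows "d + i - (N + 1 + ext_part N (\<lambda>l. d - m l - (N + 1 - l)) i) = m i"
proof -
  have e: "ext_part N (\<lambda>l. d - m l - (N + 1 - l)) i = d - m i - (N + 1 - i)"
    using k by (simp add: ext_part_def)
  obtain a where a: "a = m i" by blast
  have "a + (N + 1 - i) \<le> d" using gap_d[OF k] a by simp
  then have "d + i - (N + 1 + (d - a - (N + 1 - i))) = a" using k by linarith
  then show ?thesis using a e by simp
qed

lemma unique:
  assumes A: "schubert_var N d (\<lambda>l. m (N + 1 - l) - (N - l)) (osc_flag d 0) V"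
    and B: "schubert_var N d (special_part (d - N)) (osc_flag d (-1)) V"
    and C: "schubert_var N d (\<lambda>l. d - m l - (N + 1 - l)) (inf_flag d) V"
  shows "V = V0"
proof -
  have gr: "PV.subspace V" "V \<subseteq> Poly_le d" "PV.dim V = N + 1"
    using A by (auto simp: schubert_var_def in_Gr_def psubspace_eq pdim_eq)
  have VW: "V \<subseteq> PV.span (Mon d)" using gr(2) Mon_facts(3) by (rule order_trans)
  have Q: "[:1,1:]^d \<in> V"
  proof -
    have "1 \<in> {1..N+1}" by simp
    then have "1 \<le> pdim (V \<inter> osc_flag d (-1) (d + 1 - (N + 1 + ext_part N (special_part (d - N)) 1)))"
      using B unfolding schubert_var_def by blast
    moreover have "ext_part N (special_part (d - N)) 1 = d - N" using N1 by (simp add: ext_part_def special_part_def)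
    moreover have "d + 1 - (N + 1 + (d - N)) = 0" using N_le_d by simp
    ultimately have "1 \<le> PV.dim (V \<inter> osc_flag d (-1) 0)" by (simp add: pdim_eq)
    then obtain f where f: "f \<in> V \<inter> osc_flag d (-1) 0" "f \<noteq> 0" using PV.dim_pos_nonzero by blast
    then have fV: "f \<in> V" and fd: "degree f \<le> d" and dv: "[:1,1:]^d dvd f"
      by (auto simp: osc_flag_def Poly_le_def)
    obtain q where q: "f = [:1,1:]^d * q" using dv by (elim dvdE)
    have qnz: "q \<noteq> 0" using q f(2) by auto
    have "degree f = d + degree q" unfolding q by (subst degree_mult_eq) (simp_all add: qnz degree_linear_power)
    then have "degree q = 0" using fd by simp
    then obtain c where qc: "q = pCons c 0" by (elim degree_eq_zeroE)
    have cnz: "c \<noteq> 0" using qnz qc by auto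
    have "f = smult c ([:1,1:]^d)" using q qc by (simp add: mult_pCons_right)
    then have "[:1,1:]^d = smult (1/c) f" using cnz by simp
    then show ?thesis using PV.subspace_scale[OF gr(1) fV] by simp
  qed
  have gk: "g k \<in> V" if k: "1 \<le> k" "k \<le> N + 1" for k
  proof (cases "k = N + 1")
    case True then show ?thesis using Q by (simp add: mmf_def Ptrunc_dd)
  next
    case False
    then have k: "1 \<le> k" "k \<le> N" using k by auto
    define U where "U = V \<inter> inf_flag d (m k)"
    define Z where "Z = V \<inter> osc_flag d 0 (d - 1 - m k)"
    have "k \<in> {1..N+1}" using k by simp
    then have "k \<le> pdim (V \<inter> inf_flag d (d + k - (N + 1 + ext_part N (\<lambda>l. d - m l - (N + 1 - l)) k)))"
      using C unfolding schubert_var_def by blast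
    then have dU: "k \<le> PV.dim U" using idx_c[OF k] by (simp add: U_def pdim_eq)
    have "N + 1 - k \<in> {1..N+1}" using k by simp
    then have "N + 1 - k \<le> pdim (V \<inter> osc_flag d 0 (d + (N + 1 - k) - (N + 1 + ext_part N (\<lambda>l. m (N + 1 - l) - (N - l)) (N + 1 - k))))"
      using A unfolding schubert_var_def by blast
    then have dZ: "N + 1 - k \<le> PV.dim Z" using idx_a[OF k] by (simp add: Z_def pdim_eq)
    have sU: "PV.subspace U" unfolding U_def inf_flag_def by (intro PV.subspace_inter gr(1) Poly_le_subspace)
    have sZ: "PV.subspace Z" unfolding Z_def by (intro PV.subspace_inter gr(1) osc_subspace)
    have mkd: "d - (d - 1 - m k) = m k + 1" using m_lt_d[OF k] by simp
    have UZ: "U \<inter> Z \<subseteq> {0}"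
    proof
      fix p assume p: "p \<in> U \<inter> Z"
      then have dp: "degree p \<le> m k" by (simp add: U_def inf_flag_def Poly_le_def)
      from p have "[:- 0, 1:] ^ (d - (d - 1 - m k)) dvd p" by (simp only: Z_def osc_flag_def Int_iff mem_Collect_eq)
      then have "[:- 0, 1:] ^ (m k + 1) dvd p" using mkd by simp
      then have c0: "\<forall>t<m k + 1. coeff p t = 0" by (simp only: X_pow_dvd)
      have "p = 0"
      proof (rule poly_eqI)
        fix t show "coeff p t = coeff 0 t"
        proof (cases "t \<le> m k")
          case True then show ?thesis using c0 by simp
        next
          case False then show ?thesis using dp by (simp add: coeff_eq_0)
        qed
      qed
      then show "p \<in> {0}" by simp
    qed
    have "PV.dim V \<le> PV.dim U + PV.dim Z" using dU dZ gr(3) k by simp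
    then obtain u z where uz: "u \<in> U" "z \<in> Z" "[:1,1:]^d = u + z"
      using PV.G3[OF VW Mon_facts(1) _ _ sU sZ UZ _ Q] by (auto simp: U_def Z_def)
    have du: "degree u \<le> m k" using uz(1) by (simp add: U_def inf_flag_def Poly_le_def)
    from uz(2) have "[:- 0, 1:] ^ (d - (d - 1 - m k)) dvd z" by (simp only: Z_def osc_flag_def Int_iff mem_Collect_eq)
    then have "[:- 0, 1:] ^ (m k + 1) dvd z" using mkd by simp
    then have z0: "\<forall>t<m k + 1. coeff z t = 0" by (simp only: X_pow_dvd)
    have "u = Ptrunc (m k) d"
    proof (rule poly_eqI)
      fix t show "coeff u t = coeff (Ptrunc (m k) d) t"
      proof (cases "t \<le> m k")
        case True
        have "coeff ([:1,1:]^d) t = coeff u t + coeff z t" using uz(3) by simp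
        moreover have "coeff ([:1::complex,1:]^d) t = of_nat (d choose t)"
          using True m_lt_d[OF k] by (simp add: coeff_linear_poly_power)
        ultimately show ?thesis using z0 True by (simp add: coeff_Ptrunc)
      next
        case False then show ?thesis using du by (simp add: coeff_eq_0 coeff_Ptrunc)
      qed
    qed
    moreover have "u \<in> V" using uz(1) by (simp add: U_def)
    ultimately show ?thesis using k by (simp add: mmf_def)
  qed
  have S0V: "S0 \<subseteq> V" unfolding S0_def using gk by auto
  have "V0 \<subseteq> V" unfolding V0_def by (rule PV.span_minimal[OF S0V gr(1)])
  moreover have "V \<subseteq> V0"
  proof -
    have "PV.independent S0" "card S0 = N + 1" unfolding S0_def using indep_g[of "{1..N+1}"] by auto
    then show ?thesis unfolding V0_def using PV.H2[OF _ S0V VW Mon_facts(1)] gr(3) by simp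
  qed
  ultimately show ?thesis by blast
qed

lemma main_ctx:
  "{V. schubert_var N d (\<lambda>l. m (N + 1 - l) - (N - l)) (osc_flag d 0) V
            \<and> schubert_var N d (special_part (d - N)) (osc_flag d (-1)) V
            \<and> schubert_var N d (\<lambda>l. d - m l - (N + 1 - l)) (inf_flag d) V}
         = {pspan (insert (Ptrunc d d) ((\<lambda>i. Ptrunc (m i) d) ` {1..N}))}"
proof -
  have e: "pspan (insert (Ptrunc d d) ((\<lambda>i. Ptrunc (m i) d) ` {1..N})) = V0"
    unfolding V0_def pspan_eq S0_eq ..
  show ?thesis
    unfolding e using V0_a V0_b V0_c unique by blast
qed

end

theorem theorem4:
  fixes N d :: nat and m :: "nat \<Rightarrow> nat"
  assumes "N \<ge> 1"
    and "\<And>i j. 1 \<le> i \<Longrightarrow> i < j \<Longrightarrow> j \<le> N \<Longrightarrow> m i < m j"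
    and "m N < d"
  shows "{V. schubert_var N d (\<lambda>l. m (N + 1 - l) - (N - l)) (osc_flag d 0) V
            \<and> schubert_var N d (special_part (d - N)) (osc_flag d (-1)) V
            \<and> schubert_var N d (\<lambda>l. d - m l - (N + 1 - l)) (inf_flag d) V}
         = {pspan (insert (Ptrunc d d) ((\<lambda>i. Ptrunc (m i) d) ` {1..N}))}"
proof -
  show ?thesis
  proof (rule main_ctx)
    show "1 \<le> N" using assms(1) by simp
    show "m N < d" using assms(3) by simp
    fix i j assume "1 \<le> i" "i < j" "j \<le> N"
    then show "m i < m j" by (rule assms(2))
  qed
qed

end
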